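(* Let $M\in\mathbb R^{n\times n}$ be a sufficient matrix and let $B_1,B_2$ be complementary bases that are adjacent, i.e. $\dim\big(\mathcal C(B_1)\cap\mathcal C(B_2)\big)=n-1$. Then $|B_1\cap B_2|\ge n-2$.
   Context: Let $M\in\mathbb R^{n\times n}$ and $A=[\,I\;\;-M\,]\in\mathbb R^{n\times 2n}$, with columns indexed by $\{1,\dots,2n\}$; for $J\subseteq\{1,\dots,2n\}$, $A_{\cdot J}$ denotes the submatrix of columns indexed by $J$. For $i\in\{1,\dots,2n\}$ the complementary index is $\bar i=i+n$ if $i\le n$ and $\bar i=i-n$ if $i>n$. A set $J$ is complementary if $i\in J$ implies $\bar i\notin J$. A complementary basis is a complementary set $B$ with $|B|=n$ and $A_{\cdot B}$ invertible. For a complementary set $J$, the complementary cone is $\mathcal C(J)=\{A_{\cdot J}\lambda:\lambda\ge 0\}$. The dimension of a convex set is the dimension of its affine hull. $M$ is column sufficient if $[z_i(Mz)_i\le 0\ \forall i]\Rightarrow[z_i(Mz)_i=0\ \forall i]$; row sufficient if $M^T$ is column sufficient; sufficient if both. *)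

theory Defs
  imports "HOL-Analysis.Analysis"
begin

text \<open>Columns of A = [I, -M] are indexed by the sum type 'n + 'n:
  Inl i is column i of I (paper index i), Inr i is column i of -M (paper index i+n).
  The complement of Inl i is Inr i and vice versa.\<close>

fun colA :: "real^'n^'n \<Rightarrow> ('n + 'n) \<Rightarrow> real^'n" where
  "colA M (Inl i) = axis i 1"
| "colA M (Inr i) = - column i M"

fun cidx :: "('n + 'n) \<Rightarrow> ('n + 'n)" where
  "cidx (Inl i) = Inr i"
| "cidx (Inr i) = Inl i"

definition complementary :: "('n + 'n) set \<Rightarrow> bool" where
  "complementary J \<longleftrightarrow> (\<forall>i\<in>J. cidx i \<notin> J)"

text \<open>A_{.B} (an n x n matrix whose columns are colA M j, j in B) is invertible.\<close>
definition complementary_basis :: "real^'n^'n \<Rightarrow> ('n + 'n) set \<Rightarrow> bool" where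
  "complementary_basis M B \<longleftrightarrow> complementary B \<and> card B = CARD('n) \<and>
     inj_on (colA M) B \<and> independent (colA M ` B)"

definition ccone :: "real^'n^'n \<Rightarrow> ('n + 'n) set \<Rightarrow> (real^'n) set" where
  "ccone M J = {(\<Sum>j\<in>J. l j *\<^sub>R colA M j) | l. \<forall>j\<in>J. 0 \<le> l j}"

definition column_sufficient :: "real^'n^'n \<Rightarrow> bool" where
  "column_sufficient M \<longleftrightarrow>
     (\<forall>z. (\<forall>i. z $ i * (M *v z) $ i \<le> 0) \<longrightarrow> (\<forall>i. z $ i * (M *v z) $ i = 0))"

definition row_sufficient :: "real^'n^'n \<Rightarrow> bool" where
  "row_sufficient M \<longleftrightarrow> column_sufficient (transpose M)"

definition sufficient :: "real^'n^'n \<Rightarrow> bool" where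
  "sufficient M \<longleftrightarrow> column_sufficient M \<and> row_sufficient M"

end

theory Submission
  imports Defs
begin

lemma uniq_rep:
  fixes M :: "real^'n^'n"
  assumes cb: "complementary_basis M B"
    and eq: "(\<Sum>j\<in>B. a j *\<^sub>R colA M j) = (\<Sum>j\<in>B. b j *\<^sub>R colA M j)"
    and j: "j \<in> B"
  shows "a j = b j"
proof -
  have inj: "inj_on (colA M) B" and ind: "independent (colA M ` B)"
    using cb unfolding complementary_basis_def by auto
  have fin: "finite B" by simp
  define c where "c v = a (inv_into B (colA M) v) - b (inv_into B (colA M) v)" for v
  have "(\<Sum>j\<in>B. (a j - b j) *\<^sub>R colA M j) = 0"
    using eq by (simp add: scaleR_diff_left sum_subtractf)
  moreover have "(\<Sum>v\<in>colA M ` B. c v *\<^sub>R v) = (\<Sum>j\<in>B. (a j - b j) *\<^sub>R colA M j)"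
    using inj by (simp add: sum.reindex c_def inv_into_f_f)
  ultimately have "(\<Sum>v\<in>colA M ` B. c v *\<^sub>R v) = 0" by simp
  hence "\<forall>v\<in>colA M ` B. c v = 0"
    using ind real_vector.dependent_finite[of "colA M ` B"] by auto
  hence "c (colA M j) = 0" using j by auto
  thus ?thesis using inj j by (simp add: c_def inv_into_f_f)
qed

lemma cb_has:
  fixes M :: "real^'n^'n"
  assumes cb: "complementary_basis M B"
  shows "Inl i \<in> B \<or> Inr i \<in> B"
proof (rule ccontr)
  assume nb: "\<not> (Inl i \<in> B \<or> Inr i \<in> B)"
  have comp: "complementary B" and cardB: "card B = CARD('n)"
    using cb unfolding complementary_basis_def by auto
  define f :: "'n + 'n \<Rightarrow> 'n" where "f = case_sum id id"
  have "inj_on f B"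
  proof (rule inj_onI)
    fix x y assume xy: "x \<in> B" "y \<in> B" "f x = f y"
    show "x = y"
      using xy comp unfolding complementary_def f_def
      by (cases x; cases y) force+
  qed
  moreover have "f ` B \<subseteq> UNIV - {i}"
    using nb unfolding f_def by (auto split: sum.splits)
  ultimately have "card B \<le> card (UNIV - {i} :: 'n set)"
    by (meson card_inj_on_le finite)
  also have "\<dots> < CARD('n)" by (simp add: card_Diff_singleton)
  finally show False using cardB by simp
qed

definition wv :: "('n + 'n) set \<Rightarrow> ('n + 'n \<Rightarrow> real) \<Rightarrow> real^'n" where
  "wv B l = (\<chi> i. if Inl i \<in> B then l (Inl i) else 0)"
definition zv :: "('n + 'n) set \<Rightarrow> ('n + 'n \<Rightarrow> real) \<Rightarrow> real^'n" where
  "zv B l = (\<chi> i. if Inr i \<in> B then l (Inr i) else 0)"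

lemma rep_wz:
  fixes M :: "real^'n^'n"
  shows "(\<Sum>j\<in>B. l j *\<^sub>R colA M j) = wv B l - M *v zv B l"
proof -
  define g where "g j = (if j \<in> B then l j else 0)" for j
  have "(\<Sum>j\<in>B. l j *\<^sub>R colA M j) = (\<Sum>j\<in>UNIV. g j *\<^sub>R colA M j)"
  proof -
    have "(\<Sum>j\<in>UNIV. g j *\<^sub>R colA M j) = (\<Sum>j\<in>B. g j *\<^sub>R colA M j)"
      by (rule sum.mono_neutral_right) (auto simp: g_def)
    also have "\<dots> = (\<Sum>j\<in>B. l j *\<^sub>R colA M j)" by (rule sum.cong) (auto simp: g_def)
    finally show ?thesis by simp
  qed
  also have "\<dots> = (\<Sum>j\<in>UNIV <+> UNIV. g j *\<^sub>R colA M j)" by simp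
  also have "\<dots> = (\<Sum>i\<in>UNIV. g (Inl i) *\<^sub>R axis i 1) - (\<Sum>i\<in>UNIV. g (Inr i) *\<^sub>R column i M)"
    by (subst sum.Plus) (auto simp: o_def sum_negf)
  also have "\<dots> = wv B l - M *v zv B l"
  proof -
    have 1: "(\<Sum>i\<in>UNIV. g (Inl i) *\<^sub>R axis i 1) = wv B l"
    proof -
      { fix k
        have "(\<Sum>i\<in>UNIV. g (Inl i) *\<^sub>R axis i (1::real)) $ k = (\<Sum>i\<in>UNIV. g (Inl i) * (axis i (1::real) $ k))"
          by simp
        also have "\<dots> = (\<Sum>i\<in>UNIV. if i = k then g (Inl k) else 0)"
          by (rule sum.cong) (auto simp: axis_def)
        also have "\<dots> = wv B l $ k" by (simp add: wv_def g_def)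
        finally have "(\<Sum>i\<in>UNIV. g (Inl i) *\<^sub>R axis i (1::real)) $ k = wv B l $ k" . }
      thus ?thesis by (simp add: vec_eq_iff)
    qed
    have 2: "(\<Sum>i\<in>UNIV. g (Inr i) *\<^sub>R column i M) = M *v zv B l"
      by (simp add: vec_eq_iff zv_def g_def column_def matrix_vector_mult_def mult.commute)
    show ?thesis using 1 2 by simp
  qed
  finally show ?thesis .
qed

lemma key:
  fixes M :: "real^'n^'n"
  assumes cs: "column_sufficient M"
    and c1: "complementary B1" and c2: "complementary B2"
    and p1: "\<forall>j\<in>B1. 0 \<le> l1 j" and p2: "\<forall>j\<in>B2. 0 \<le> l2 j"
    and eq: "(\<Sum>j\<in>B1. l1 j *\<^sub>R colA M j) = (\<Sum>j\<in>B2. l2 j *\<^sub>R colA M j)"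
    and j1: "j \<in> B1" and j2: "cidx j \<in> B2"
  shows "l1 j * l2 (cidx j) = 0"
proof -
  define d where "d = zv B1 l1 - zv B2 l2"
  have Md: "M *v d = wv B1 l1 - wv B2 l2"
    using eq unfolding rep_wz d_def by (simp add: matrix_vector_mult_diff_distrib algebra_simps)
  have le: "\<forall>i. d $ i * (M *v d) $ i \<le> 0"
  proof
    fix i
    have a1: "\<not> (Inl i \<in> B1 \<and> Inr i \<in> B1)" using c1 unfolding complementary_def by force
    have a2: "\<not> (Inl i \<in> B2 \<and> Inr i \<in> B2)" using c2 unfolding complementary_def by force
    show "d $ i * (M *v d) $ i \<le> 0"
      unfolding Md unfolding d_def using a1 a2 p1 p2
      by (cases "Inl i \<in> B1"; cases "Inr i \<in> B1"; cases "Inl i \<in> B2"; cases "Inr i \<in> B2")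
         (auto simp: wv_def zv_def mult_nonneg_nonneg mult_nonneg_nonpos mult_nonpos_nonneg)
  qed
  hence eq0: "\<forall>i. d $ i * (M *v d) $ i = 0" using cs unfolding column_sufficient_def by blast
  show ?thesis
  proof (cases j)
    case (Inl i)
    have "Inr i \<notin> B1" using c1 j1 Inl unfolding complementary_def by force
    moreover have "Inl i \<notin> B2" using c2 j2 Inl unfolding complementary_def by force
    ultimately show ?thesis using eq0[rule_format, of i] j1 j2 Inl
      unfolding Md unfolding d_def by (auto simp: wv_def zv_def)
  next
    case (Inr i)
    have "Inl i \<notin> B1" using c1 j1 Inr unfolding complementary_def by force
    moreover have "Inr i \<notin> B2" using c2 j2 Inr unfolding complementary_def by force
    ultimately show ?thesis using eq0[rule_format, of i] j1 j2 Inr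
      unfolding Md unfolding d_def by (auto simp: wv_def zv_def)
  qed
qed

lemma aff_dim_span_le:
  fixes M :: "real^'n^'n"
  assumes "K \<subseteq> span (colA M ` S)" "finite S"
  shows "aff_dim K \<le> int (card S)"
proof -
  have "aff_dim K \<le> aff_dim (span (colA M ` S))" by (rule aff_dim_subset[OF assms(1)])
  also have "\<dots> = int (dim (span (colA M ` S)))" by (simp add: aff_dim_subspace)
  also have "\<dots> = int (dim (colA M ` S))" by simp
  also have "dim (colA M ` S) \<le> card (colA M ` S)"
    by (rule dim_le_card) (auto simp: span_superset assms(2))
  hence "int (dim (colA M ` S)) \<le> int (card S)"
    using card_image_le[OF assms(2), of "colA M"] by linarith
  finally show ?thesis .
qed

lemma in_span_restrict:
  fixes M :: "real^'n^'n"
  assumes "\<forall>j\<in>T. l j = 0" "T \<subseteq> B"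
  shows "(\<Sum>j\<in>B. l j *\<^sub>R colA M j) \<in> span (colA M ` (B - T))"
proof -
  have "(\<Sum>j\<in>B. l j *\<^sub>R colA M j) = (\<Sum>j\<in>B - T. l j *\<^sub>R colA M j)"
    by (rule sum.mono_neutral_right) (use assms in auto)
  also have "\<dots> \<in> span (colA M ` (B - T))"
    by (intro span_sum span_scale span_base) auto
  finally show ?thesis .
qed

lemma ccone_add:
  fixes M :: "real^'n^'n"
  assumes "x \<in> ccone M B" "y \<in> ccone M B"
  shows "x + y \<in> ccone M B"
proof -
  obtain l where l: "\<forall>j\<in>B. 0 \<le> l j" "x = (\<Sum>j\<in>B. l j *\<^sub>R colA M j)"
    using assms(1) unfolding ccone_def by blast
  obtain l' where l': "\<forall>j\<in>B. 0 \<le> l' j" "y = (\<Sum>j\<in>B. l' j *\<^sub>R colA M j)"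
    using assms(2) unfolding ccone_def by blast
  have "x + y = (\<Sum>j\<in>B. (l j + l' j) *\<^sub>R colA M j)"
    using l l' by (simp add: scaleR_add_left sum.distrib)
  moreover have "\<forall>j\<in>B. 0 \<le> l j + l' j" using l l' by auto
  ultimately have "\<exists>m. x + y = (\<Sum>j\<in>B. m j *\<^sub>R colA M j) \<and> (\<forall>j\<in>B. 0 \<le> m j)"
    by (intro exI[of _ "\<lambda>j. l j + l' j"] conjI) simp_all
  thus ?thesis unfolding ccone_def by (simp add: Setcompr_eq_image)
qed

theorem mainTheorem1:
  fixes M :: "real^'n^'n" and B1 B2 :: "('n + 'n) set"
  assumes "sufficient M"
    and "complementary_basis M B1" and "complementary_basis M B2"
    and "aff_dim (ccone M B1 \<inter> ccone M B2) = int CARD('n) - 1"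
  shows "int (card (B1 \<inter> B2)) \<ge> int CARD('n) - 2"
proof -
  note cb1 = assms(2) and cb2 = assms(3)
  have cs: "column_sufficient M" using assms(1) unfolding sufficient_def by simp
  have c1: "complementary B1" and n1: "card B1 = CARD('n)" using cb1 unfolding complementary_basis_def by auto
  have c2: "complementary B2" and n2: "card B2 = CARD('n)" using cb2 unfolding complementary_basis_def by auto
  define K where "K = ccone M B1 \<inter> ccone M B2"
  define L where "L B x = (SOME l. (\<forall>j\<in>B. 0 \<le> l j) \<and> x = (\<Sum>j\<in>B. l j *\<^sub>R colA M j))" for B x
  have Lp: "(\<forall>j\<in>B. 0 \<le> L B x j) \<and> x = (\<Sum>j\<in>B. L B x j *\<^sub>R colA M j)" if "x \<in> ccone M B" for B x
  proof -
    have "\<exists>l. (\<forall>j\<in>B. 0 \<le> l j) \<and> x = (\<Sum>j\<in>B. l j *\<^sub>R colA M j)"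
      using that unfolding ccone_def by blast
    thus ?thesis unfolding L_def by (rule someI_ex)
  qed
  have Ladd: "L B (x + y) j = L B x j + L B y j"
    if "complementary_basis M B" "x \<in> ccone M B" "y \<in> ccone M B" "j \<in> B" for B x y j
  proof (rule uniq_rep[OF that(1) _ that(4)])
    have "x + y \<in> ccone M B" using ccone_add that by blast
    hence "x + y = (\<Sum>j\<in>B. L B (x+y) j *\<^sub>R colA M j)" using Lp by blast
    moreover have "x + y = (\<Sum>j\<in>B. (L B x j + L B y j) *\<^sub>R colA M j)"
      using Lp[OF that(2)] Lp[OF that(3)] by (simp add: scaleR_add_left sum.distrib)
    ultimately show "(\<Sum>j\<in>B. L B (x+y) j *\<^sub>R colA M j) = (\<Sum>j\<in>B. (L B x j + L B y j) *\<^sub>R colA M j)"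
      by simp
  qed
  have K1: "L B1 x j * L B2 x (cidx j) = 0" if "x \<in> K" "j \<in> B1" "cidx j \<in> B2" for x j
  proof -
    have "x \<in> ccone M B1" "x \<in> ccone M B2" using that unfolding K_def by auto
    from Lp[OF this(1)] Lp[OF this(2)] show ?thesis
      by (intro key[OF cs c1 c2 _ _ _ that(2,3)]) auto
  qed
  have K2: "L B1 x j * L B2 y (cidx j) = 0" if "x \<in> K" "y \<in> K" "j \<in> B1" "cidx j \<in> B2" for x y j
  proof -
    have xy: "x + y \<in> K" using that ccone_add unfolding K_def by blast
    have a: "L B1 (x+y) j = L B1 x j + L B1 y j"
      using Ladd[OF cb1] that unfolding K_def by blast
    have b: "L B2 (x+y) (cidx j) = L B2 x (cidx j) + L B2 y (cidx j)"
      using Ladd[OF cb2] that unfolding K_def by blast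
    have "(L B1 x j + L B1 y j) * (L B2 x (cidx j) + L B2 y (cidx j)) = 0"
      using K1[OF xy that(3,4)] a b by simp
    moreover have "0 \<le> L B1 x j" "0 \<le> L B1 y j" "0 \<le> L B2 x (cidx j)" "0 \<le> L B2 y (cidx j)"
      using Lp that unfolding K_def by auto
    ultimately show ?thesis
      by (smt (verit, ccfv_threshold) mult_nonneg_nonneg distrib_left distrib_right)
  qed
  define D where "D = B1 - B2"
  have cD: "cidx j \<in> B2" if "j \<in> D" for j
    using that cb_has[OF cb2] unfolding D_def by (cases j) force+
  define T1 where "T1 = {j\<in>D. \<forall>x\<in>K. L B1 x j = 0}"
  define T2 where "T2 = D - T1"
  have T2p: "\<forall>y\<in>K. L B2 y (cidx j) = 0" if "j \<in> T2" for j
  proof -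
    from that obtain x where "x \<in> K" "L B1 x j \<noteq> 0" "j \<in> D" unfolding T2_def T1_def by auto
    thus ?thesis using K2 cD unfolding D_def by fastforce
  qed
  have cardD: "card D \<le> 2"
  proof (rule ccontr)
    assume "\<not> card D \<le> 2"
    moreover have "card D = card T1 + card T2"
      unfolding T2_def by (metis (no_types, lifting) T1_def card_Diff_subset finite le_add_diff_inverse mem_Collect_eq subsetI card_mono)
    ultimately have "card T1 \<ge> 2 \<or> card T2 \<ge> 2" by linarith
    moreover have False if "card T1 \<ge> 2"
    proof -
      have "K \<subseteq> span (colA M ` (B1 - T1))"
      proof
        fix x assume x: "x \<in> K"
        hence "x = (\<Sum>j\<in>B1. L B1 x j *\<^sub>R colA M j)" using Lp unfolding K_def by blast
        also have "\<dots> \<in> span (colA M ` (B1 - T1))"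
          by (rule in_span_restrict) (use x in \<open>auto simp: T1_def D_def\<close>)
        finally show "x \<in> span (colA M ` (B1 - T1))" .
      qed
      hence "aff_dim K \<le> int (card (B1 - T1))" by (rule aff_dim_span_le) simp
      moreover have "card (B1 - T1) = card B1 - card T1"
        by (rule card_Diff_subset) (auto simp: T1_def D_def)
      moreover have "card T1 \<le> card B1" by (rule card_mono) (auto simp: T1_def D_def)
      ultimately show False using that n1 assms(4) unfolding K_def by linarith
    qed
    moreover have False if "card T2 \<ge> 2"
    proof -
      have sub: "cidx ` T2 \<subseteq> B2" using cD unfolding T2_def by auto
      have "K \<subseteq> span (colA M ` (B2 - cidx ` T2))"
      proof
        fix x assume x: "x \<in> K"
        hence "x = (\<Sum>j\<in>B2. L B2 x j *\<^sub>R colA M j)" using Lp unfolding K_def by blast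
        also have "\<dots> \<in> span (colA M ` (B2 - cidx ` T2))"
          by (rule in_span_restrict) (use x sub T2p in auto)
        finally show "x \<in> span (colA M ` (B2 - cidx ` T2))" .
      qed
      hence "aff_dim K \<le> int (card (B2 - cidx ` T2))" by (rule aff_dim_span_le) simp
      moreover have "card (B2 - cidx ` T2) = card B2 - card (cidx ` T2)"
        by (rule card_Diff_subset) (use sub in auto)
      moreover have "card (cidx ` T2) = card T2"
      proof (rule card_image)
        show "inj_on cidx T2"
        proof (rule inj_onI)
          fix a b assume "cidx a = cidx b" thus "a = b" by (cases a; cases b) auto
        qed
      qed
      moreover have "card (cidx ` T2) \<le> card B2" by (rule card_mono) (use sub in auto)
      ultimately show False using that n2 assms(4) unfolding K_def by linarith
    qed
    ultimately show False by blast
  qed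
  have "card D = card B1 - card (B1 \<inter> B2)" unfolding D_def by (rule card_Diff_subset_Int) simp
  moreover have "card (B1 \<inter> B2) \<le> card B1" by (rule card_mono) auto
  ultimately show ?thesis using cardD n1 by linarith
qed

end
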